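(* Let $S$ be a finite poset with acyclic Hasse graph $\Gamma(S)$, and let $s_t$ be a terminal point of $S$ which is a Dynkin point of $S$. Then for every poset $\overrightarrow S$ on the same set with $\Gamma(\overrightarrow S)=\Gamma(S)$, the point $s_t$ is a Dynkin point of $\overrightarrow S$.
   Context: For $S=\{s_1,\dots,s_n\}$, $f_S(x)=\sum_i x_i^2+\sum_{s_i<s_j}x_ix_j$, so $\frac{\partial f_S}{\partial x_m}(x)=2x_m+\sum_{j\ne m,\ s_j\text{ comparable with }s_m}x_j$. $\Gamma(S)$ has vertex set $S$ and an edge between $s,s'$ when one covers the other. A terminal point is a vertex of degree $\le1$ in $\Gamma(S)$. $s_m$ is a Dynkin point of $S$ if there is a nonzero $d\in\mathbb Z^n$ with $0\le\frac{\partial f_S}{\partial x_m}(d)\le2$ and $\frac{\partial f_S}{\partial x_j}(d)=0$ for $j\ne m$. *)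

theory Defs
  imports Main
begin

definition poset_on :: "'a set \<Rightarrow> ('a \<Rightarrow> 'a \<Rightarrow> bool) \<Rightarrow> bool" where
  "poset_on V le \<longleftrightarrow>
     (\<forall>x\<in>V. le x x) \<and>
     (\<forall>x\<in>V. \<forall>y\<in>V. le x y \<and> le y x \<longrightarrow> x = y) \<and>
     (\<forall>x\<in>V. \<forall>y\<in>V. \<forall>z\<in>V. le x y \<and> le y z \<longrightarrow> le x z)"

definition less_in :: "('a \<Rightarrow> 'a \<Rightarrow> bool) \<Rightarrow> 'a \<Rightarrow> 'a \<Rightarrow> bool" where
  "less_in le x y \<longleftrightarrow> le x y \<and> x \<noteq> y"

definition covers :: "'a set \<Rightarrow> ('a \<Rightarrow> 'a \<Rightarrow> bool) \<Rightarrow> 'a \<Rightarrow> 'a \<Rightarrow> bool" where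
  "covers V le x y \<longleftrightarrow> x \<in> V \<and> y \<in> V \<and> less_in le x y \<and>
     \<not> (\<exists>z\<in>V. less_in le x z \<and> less_in le z y)"

definition hasse_edge :: "'a set \<Rightarrow> ('a \<Rightarrow> 'a \<Rightarrow> bool) \<Rightarrow> 'a \<Rightarrow> 'a \<Rightarrow> bool" where
  "hasse_edge V le x y \<longleftrightarrow> covers V le x y \<or> covers V le y x"

definition hasse_acyclic :: "'a set \<Rightarrow> ('a \<Rightarrow> 'a \<Rightarrow> bool) \<Rightarrow> bool" where
  "hasse_acyclic V le \<longleftrightarrow>
     \<not> (\<exists>cs. length cs \<ge> 3 \<and> distinct cs \<and> set cs \<subseteq> V \<and>
            (\<forall>i. Suc i < length cs \<longrightarrow> hasse_edge V le (cs ! i) (cs ! Suc i)) \<and>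
            hasse_edge V le (last cs) (hd cs))"

definition hasse_degree :: "'a set \<Rightarrow> ('a \<Rightarrow> 'a \<Rightarrow> bool) \<Rightarrow> 'a \<Rightarrow> nat" where
  "hasse_degree V le s = card {s' \<in> V. hasse_edge V le s s'}"

definition terminal_point :: "'a set \<Rightarrow> ('a \<Rightarrow> 'a \<Rightarrow> bool) \<Rightarrow> 'a \<Rightarrow> bool" where
  "terminal_point V le s \<longleftrightarrow> s \<in> V \<and> hasse_degree V le s \<le> 1"

definition comparable_in :: "('a \<Rightarrow> 'a \<Rightarrow> bool) \<Rightarrow> 'a \<Rightarrow> 'a \<Rightarrow> bool" where
  "comparable_in le x y \<longleftrightarrow> le x y \<or> le y x"

text \<open>Partial derivative of f_S(x) = sum x_i^2 + sum_{s_i<s_j} x_i x_j with respect to x_m,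
  for x a vector indexed by the elements of V.\<close>
definition dfS :: "'a set \<Rightarrow> ('a \<Rightarrow> 'a \<Rightarrow> bool) \<Rightarrow> ('a \<Rightarrow> int) \<Rightarrow> 'a \<Rightarrow> int" where
  "dfS V le x m = 2 * x m + (\<Sum>j\<in>{j \<in> V. j \<noteq> m \<and> comparable_in le j m}. x j)"

definition dynkin_point :: "'a set \<Rightarrow> ('a \<Rightarrow> 'a \<Rightarrow> bool) \<Rightarrow> 'a \<Rightarrow> bool" where
  "dynkin_point V le m \<longleftrightarrow> m \<in> V \<and>
     (\<exists>d :: 'a \<Rightarrow> int. (\<forall>x. x \<notin> V \<longrightarrow> d x = 0) \<and> (\<exists>x\<in>V. d x \<noteq> 0) \<and>
        0 \<le> dfS V le d m \<and> dfS V le d m \<le> 2 \<and>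
        (\<forall>j\<in>V. j \<noteq> m \<longrightarrow> dfS V le d j = 0))"

end

theory Submission
  imports Defs "HOL-Library.Transitive_Closure_Table"
begin


lemma sum_upd:
  fixes f d :: "'a \<Rightarrow> int"
  assumes "finite A" "u \<noteq> w"
  shows "(\<Sum>k\<in>A. f k * (d k + (if k = u then \<alpha> else 0) + (if k = w then \<beta> else 0)))
     = (\<Sum>k\<in>A. f k * d k) + (if u \<in> A then f u * \<alpha> else 0) + (if w \<in> A then f w * \<beta> else 0)"
proof -
  have "(\<Sum>k\<in>A. f k * (d k + (if k = u then \<alpha> else 0) + (if k = w then \<beta> else 0)))
     = (\<Sum>k\<in>A. f k * d k + ((if k = u then f u * \<alpha> else 0) + (if k = w then f w * \<beta> else 0)))"
    by (rule sum.cong) (auto simp: algebra_simps)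
  also have "\<dots> = (\<Sum>k\<in>A. f k * d k) + ((\<Sum>k\<in>A. if k = u then f u * \<alpha> else 0) + (\<Sum>k\<in>A. if k = w then f w * \<beta> else 0))"
    by (simp add: sum.distrib)
  also have "\<dots> = (\<Sum>k\<in>A. f k * d k) + (if u \<in> A then f u * \<alpha> else 0) + (if w \<in> A then f w * \<beta> else 0)"
    using assms(1) by (simp add: sum.delta)
  finally show ?thesis .
qed

lemma sum_ind:
  fixes d :: "'a \<Rightarrow> int"
  assumes "finite W" "Q \<subseteq> W"
  shows "(\<Sum>k\<in>W. (if k \<in> Q then 1 else 0) * d k) = sum d Q"
proof -
  have "(\<Sum>k\<in>W. (if k \<in> Q then 1 else 0) * d k) = (\<Sum>k\<in>W. if k \<in> Q then d k else 0)"
    by (rule sum.cong) auto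
  also have "\<dots> = sum d (W \<inter> Q)" using assms(1) by (simp add: sum.inter_restrict)
  also have "W \<inter> Q = Q" using assms by auto
  finally show ?thesis .
qed

lemma alg:
  fixes K K2 :: "'a \<Rightarrow> 'a \<Rightarrow> int" and d :: "'a \<Rightarrow> int"
  assumes fin: "finite V" and UW: "U \<inter> W = {}" "V = U \<union> W"
    and uw: "u \<in> U" "w \<in> W"
    and PQ: "P \<subseteq> U" "P' \<subseteq> U" "Q \<subseteq> W" "Q' \<subseteq> W"
    and mem: "u \<in> P" "u \<in> P'" "w \<in> Q" "w \<in> Q'"
    and sameU: "\<forall>i\<in>U. \<forall>j\<in>U. K2 i j = K i j"
    and sameW: "\<forall>i\<in>W. \<forall>j\<in>W. K2 i j = K i j"
    and cross: "\<forall>a\<in>U. \<forall>b\<in>W. K a b = (if a \<in> P \<and> b \<in> Q then 1 else 0)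
                 \<and> K b a = (if a \<in> P \<and> b \<in> Q then 1 else 0)
                 \<and> K2 a b = (if a \<in> P' \<and> b \<in> Q' then 1 else 0)
                 \<and> K2 b a = (if a \<in> P' \<and> b \<in> Q' then 1 else 0)"
    and ku: "\<forall>a\<in>U. K a u = (if a \<in> P then 1 else 0) + (if a \<in> P' then 1 else 0)
                 \<and> K u a = (if a \<in> P then 1 else 0) + (if a \<in> P' then 1 else 0)"
    and kw: "\<forall>b\<in>W. K w b = (if b \<in> Q then 1 else 0) + (if b \<in> Q' then 1 else 0)
                 \<and> K b w = (if b \<in> Q then 1 else 0) + (if b \<in> Q' then 1 else 0)"
  defines "g \<equiv> \<lambda>j. (\<Sum>k\<in>V. K j k * d k)"
    and "\<alpha> \<equiv> sum d Q"
    and "\<beta> \<equiv> - (\<Sum>k\<in>W. K w k * d k)"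
  defines "d' \<equiv> \<lambda>k. d k + (if k = u then \<alpha> else 0) + (if k = w then \<beta> else 0)"
  defines "g2 \<equiv> \<lambda>j. (\<Sum>k\<in>V. K2 j k * d' k)"
  shows "\<forall>j\<in>U. g2 j = g j"
    and "\<forall>j\<in>W. g2 j = g j - (if j \<in> Q then g w else 0) + (if j \<in> Q' then g u - g w else 0)"
proof -
  have finU: "finite U" and finW: "finite W" using fin UW by auto
  have uw': "u \<noteq> w" using uw UW by auto
  have uW: "u \<notin> W" and wU: "w \<notin> U" using uw UW by auto
  have splitV: "\<And>f. sum f V = sum f U + sum f W"
    using UW finU finW by (simp add: sum.union_disjoint)
  define SP where "SP = sum d P"
  define SP' where "SP' = sum d P'"
  define SQ' where "SQ' = sum d Q'"
  have sumKw: "(\<Sum>k\<in>W. K w k * d k) = \<alpha> + SQ'"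
  proof -
    have "(\<Sum>k\<in>W. K w k * d k) = (\<Sum>k\<in>W. (if k \<in> Q then 1 else 0) * d k + (if k \<in> Q' then 1 else 0) * d k)"
      by (rule sum.cong) (use kw in \<open>auto simp: algebra_simps\<close>)
    also have "\<dots> = \<alpha> + SQ'" using sum_ind[OF finW PQ(3)] sum_ind[OF finW PQ(4)]
      by (simp add: sum.distrib \<alpha>_def SQ'_def)
    finally show ?thesis .
  qed
  have sumKu: "(\<Sum>k\<in>U. K u k * d k) = SP + SP'"
  proof -
    have "(\<Sum>k\<in>U. K u k * d k) = (\<Sum>k\<in>U. (if k \<in> P then 1 else 0) * d k + (if k \<in> P' then 1 else 0) * d k)"
      by (rule sum.cong) (use ku in \<open>auto simp: algebra_simps\<close>)
    also have "\<dots> = SP + SP'" using sum_ind[OF finU PQ(1)] sum_ind[OF finU PQ(2)]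
      by (simp add: sum.distrib SP_def SP'_def)
    finally show ?thesis .
  qed
  have gw: "g w = SP + (\<alpha> + SQ')"
  proof -
    have "(\<Sum>k\<in>U. K w k * d k) = (\<Sum>k\<in>U. (if k \<in> P then 1 else 0) * d k)"
      by (rule sum.cong) (use cross uw mem in auto)
    then have "(\<Sum>k\<in>U. K w k * d k) = SP" using sum_ind[OF finU PQ(1)] SP_def by simp
    then show ?thesis unfolding g_def using sumKw by (simp add: splitV)
  qed
  have gu: "g u = SP + SP' + \<alpha>"
  proof -
    have "(\<Sum>k\<in>W. K u k * d k) = (\<Sum>k\<in>W. (if k \<in> Q then 1 else 0) * d k)"
      by (rule sum.cong) (use cross uw mem in auto)
    then have "(\<Sum>k\<in>W. K u k * d k) = \<alpha>" using sum_ind[OF finW PQ(3)] \<alpha>_def by simp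
    then show ?thesis unfolding g_def using sumKu by (simp add: splitV)
  qed
  have bet: "\<beta> = - (\<alpha> + SQ')" using sumKw \<beta>_def by simp
  show "\<forall>j\<in>U. g2 j = g j"
  proof
    fix j assume j: "j \<in> U"
    have a1: "(\<Sum>k\<in>U. K2 j k * d' k) = (\<Sum>k\<in>U. K j k * d k) + K j u * \<alpha>"
    proof -
      have "(\<Sum>k\<in>U. K2 j k * d' k) = (\<Sum>k\<in>U. K j k * d' k)"
        by (rule sum.cong) (use sameU j in auto)
      also have "\<dots> = (\<Sum>k\<in>U. K j k * d k) + K j u * \<alpha>"
        unfolding d'_def using sum_upd[OF finU uw'] uw wU by simp
      finally show ?thesis .
    qed
    have a2: "(\<Sum>k\<in>W. K2 j k * d' k) = (if j \<in> P' then SQ' + \<beta> else 0)"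
    proof -
      have "(\<Sum>k\<in>W. K2 j k * d' k) = (\<Sum>k\<in>W. K2 j k * d k) + K2 j w * \<beta>"
        unfolding d'_def using sum_upd[OF finW uw'] uw uW by simp
      also have "(\<Sum>k\<in>W. K2 j k * d k) = (\<Sum>k\<in>W. (if j \<in> P' then 1 else 0) * ((if k \<in> Q' then 1 else 0) * d k))"
        by (rule sum.cong) (use cross j in auto)
      also have "\<dots> = (if j \<in> P' then SQ' else 0)"
        using sum_ind[OF finW PQ(4)] SQ'_def by (simp add: sum_distrib_left[symmetric])
      finally show ?thesis using cross j uw mem by auto
    qed
    have b2: "(\<Sum>k\<in>W. K j k * d k) = (if j \<in> P then \<alpha> else 0)"
    proof -
      have "(\<Sum>k\<in>W. K j k * d k) = (\<Sum>k\<in>W. (if j \<in> P then 1 else 0) * ((if k \<in> Q then 1 else 0) * d k))"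
        by (rule sum.cong) (use cross j in auto)
      also have "\<dots> = (if j \<in> P then \<alpha> else 0)"
        using sum_ind[OF finW PQ(3)] \<alpha>_def by (simp add: sum_distrib_left[symmetric])
      finally show ?thesis .
    qed
    have Kju: "K j u = (if j \<in> P then 1 else 0) + (if j \<in> P' then 1 else 0)" using ku j by auto
    have gj: "g j = (\<Sum>k\<in>U. K j k * d k) + (\<Sum>k\<in>W. K j k * d k)" unfolding g_def by (rule splitV)
    have g2j: "g2 j = (\<Sum>k\<in>U. K2 j k * d' k) + (\<Sum>k\<in>W. K2 j k * d' k)" unfolding g2_def by (rule splitV)
    show "g2 j = g j" using gj g2j a1 a2 b2 bet Kju
      by (auto simp: algebra_simps)
  qed
  show "\<forall>j\<in>W. g2 j = g j - (if j \<in> Q then g w else 0) + (if j \<in> Q' then g u - g w else 0)"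
  proof
    fix j assume j: "j \<in> W"
    have a1: "(\<Sum>k\<in>W. K2 j k * d' k) = (\<Sum>k\<in>W. K j k * d k) + K j w * \<beta>"
    proof -
      have "(\<Sum>k\<in>W. K2 j k * d' k) = (\<Sum>k\<in>W. K j k * d' k)"
        by (rule sum.cong) (use sameW j in auto)
      also have "\<dots> = (\<Sum>k\<in>W. K j k * d k) + K j w * \<beta>"
        unfolding d'_def using sum_upd[OF finW uw'] uw uW by simp
      finally show ?thesis .
    qed
    have a2: "(\<Sum>k\<in>U. K2 j k * d' k) = (if j \<in> Q' then SP' + \<alpha> else 0)"
    proof -
      have "(\<Sum>k\<in>U. K2 j k * d' k) = (\<Sum>k\<in>U. K2 j k * d k) + K2 j u * \<alpha>"
        unfolding d'_def using sum_upd[OF finU uw'] uw wU by simp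
      also have "(\<Sum>k\<in>U. K2 j k * d k) = (\<Sum>k\<in>U. (if j \<in> Q' then 1 else 0) * ((if k \<in> P' then 1 else 0) * d k))"
        by (rule sum.cong) (use cross j in auto)
      also have "\<dots> = (if j \<in> Q' then SP' else 0)"
        using sum_ind[OF finU PQ(2)] SP'_def by (simp add: sum_distrib_left[symmetric])
      finally show ?thesis using cross j uw mem by auto
    qed
    have b2: "(\<Sum>k\<in>U. K j k * d k) = (if j \<in> Q then SP else 0)"
    proof -
      have "(\<Sum>k\<in>U. K j k * d k) = (\<Sum>k\<in>U. (if j \<in> Q then 1 else 0) * ((if k \<in> P then 1 else 0) * d k))"
        by (rule sum.cong) (use cross j in auto)
      also have "\<dots> = (if j \<in> Q then SP else 0)"
        using sum_ind[OF finU PQ(1)] SP_def by (simp add: sum_distrib_left[symmetric])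
      finally show ?thesis .
    qed
    have Kjw: "K j w = (if j \<in> Q then 1 else 0) + (if j \<in> Q' then 1 else 0)" using kw j by auto
    have gj: "g j = (\<Sum>k\<in>U. K j k * d k) + (\<Sum>k\<in>W. K j k * d k)" unfolding g_def by (rule splitV)
    have g2j: "g2 j = (\<Sum>k\<in>U. K2 j k * d' k) + (\<Sum>k\<in>W. K2 j k * d' k)" unfolding g2_def by (rule splitV)
    show "g2 j = g j - (if j \<in> Q then g w else 0) + (if j \<in> Q' then g u - g w else 0)"
      using gj g2j a1 a2 b2 bet gw gu Kjw
      by (auto simp: algebra_simps)
  qed
qed



lemma closed_rt:
  assumes "\<forall>x y. r x y \<longrightarrow> x \<in> X \<longrightarrow> y \<in> X" "r\<^sup>*\<^sup>* a b" "a \<in> X"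
  shows "b \<in> X"
  using assms(2,3) by (induction rule: rtranclp_induct) (use assms(1) in blast)+

lemma closed_restr:
  assumes "\<forall>x y. r x y \<longrightarrow> x \<in> X \<longrightarrow> y \<in> X" "r\<^sup>*\<^sup>* a b" "a \<in> X"
  shows "(\<lambda>x y. r x y \<and> x \<in> X \<and> y \<in> X)\<^sup>*\<^sup>* a b"
  using assms(2,3)
proof (induction rule: rtranclp_induct)
  case base then show ?case by simp
next
  case (step y z)
  have "y \<in> X" using closed_rt[OF assms(1) step.hyps(1) step.prems] .
  then have "z \<in> X" using assms(1) step.hyps(2) by blast
  have "(\<lambda>x y. r x y \<and> x \<in> X \<and> y \<in> X)\<^sup>*\<^sup>* a y" using step.IH[OF step.prems] .
  then show ?case using step.hyps(2) \<open>y \<in> X\<close> \<open>z \<in> X\<close>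
    by (simp add: rtranclp.rtrancl_into_rtrancl)
qed

lemma closed_restr2:
  assumes "\<forall>x y. r x y \<longrightarrow> x \<in> X \<longrightarrow> y \<in> X" "r\<^sup>*\<^sup>* a b" "b \<notin> X"
  shows "(\<lambda>x y. r x y \<and> x \<notin> X \<and> y \<notin> X)\<^sup>*\<^sup>* a b"
  using assms(2,3)
proof (induction rule: converse_rtranclp_induct)
  case base then show ?case by simp
next
  case (step y z)
  have "z \<notin> X" using closed_rt[OF assms(1) step.hyps(2)] step.prems by blast
  then have "y \<notin> X" using assms(1) step.hyps(1) by blast
  have "(\<lambda>x y. r x y \<and> x \<notin> X \<and> y \<notin> X)\<^sup>*\<^sup>* z b" using step.IH[OF step.prems] .
  then show ?case using step.hyps(1) \<open>y \<notin> X\<close> \<open>z \<notin> X\<close>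
    by (simp add: converse_rtranclp_into_rtranclp)
qed

lemma cross_rt:
  assumes "\<forall>x y. r x y \<longrightarrow> x \<notin> X \<longrightarrow> y \<in> X \<longrightarrow> x = u \<and> y = w" "r\<^sup>*\<^sup>* a b" "a \<notin> X" "b \<in> X"
  shows "r\<^sup>*\<^sup>* a u \<and> r\<^sup>*\<^sup>* w b"
  using assms(2,4)
proof (induction rule: rtranclp_induct)
  case base then show ?case using assms(3) by simp
next
  case (step y z)
  show ?case
  proof (cases "y \<in> X")
    case True
    then have "r\<^sup>*\<^sup>* a u \<and> r\<^sup>*\<^sup>* w y" using step.IH by blast
    then show ?thesis using step.hyps(2) by (meson rtranclp.rtrancl_into_rtrancl)
  next
    case False
    then have "y = u \<and> z = w" using assms(1) step.hyps(2) step.prems by blast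
    then show ?thesis using step.hyps(1) by simp
  qed
qed

lemma path_props:
  "rtrancl_path R x xs y \<Longrightarrow> (\<forall>i. Suc i < length (x#xs) \<longrightarrow> R ((x#xs)!i) ((x#xs)!Suc i))
     \<and> (xs \<noteq> [] \<longrightarrow> last xs = y) \<and> (xs = [] \<longrightarrow> x = y)"
proof (induction rule: rtrancl_path.induct)
  case (base x) then show ?case by simp
next
  case (step x y ys z)
  have "\<forall>i. Suc i < length (x#y#ys) \<longrightarrow> R ((x#y#ys)!i) ((x#y#ys)!Suc i)"
  proof (intro allI impI)
    fix i assume "Suc i < length (x#y#ys)"
    then show "R ((x#y#ys)!i) ((x#y#ys)!Suc i)" using step.hyps(1) step.IH by (cases i) auto
  qed
  then show ?case using step.IH by auto
qed

lemma path_set: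
  "rtrancl_path R x xs y \<Longrightarrow> (\<forall>a b. R a b \<longrightarrow> b \<in> V) \<Longrightarrow> set xs \<subseteq> V"
  by (induction rule: rtrancl_path.induct) auto



lemma alg_nz:
  fixes K :: "'a \<Rightarrow> 'a \<Rightarrow> int" and d :: "'a \<Rightarrow> int"
  assumes "finite W" "w \<in> W" "u \<notin> W" "K w w = 2" "w \<in> Q" "Q \<subseteq> W" "u \<in> V" "W \<subseteq> V"
    and h: "\<forall>k\<in>V. d k + (if k = u then sum d Q else 0) + (if k = w then - (\<Sum>k\<in>W. K w k * d k) else 0) = 0"
  shows "\<forall>k\<in>V. d k = 0"
proof -
  have uw: "u \<noteq> w" using assms by auto
  have o: "\<And>k. k \<in> V \<Longrightarrow> k \<noteq> u \<Longrightarrow> k \<noteq> w \<Longrightarrow> d k = 0"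
    using h by force
  have "(\<Sum>k\<in>W. K w k * d k) = K w w * d w + (\<Sum>k\<in>W-{w}. K w k * d k)"
    using assms(1,2) by (simp add: sum.remove)
  also have "(\<Sum>k\<in>W-{w}. K w k * d k) = 0"
    by (rule sum.neutral) (use o assms in auto)
  finally have s1: "(\<Sum>k\<in>W. K w k * d k) = 2 * d w" using assms(4) by simp
  have "d w + - (\<Sum>k\<in>W. K w k * d k) = 0" using h assms uw by force
  then have dw: "d w = 0" using s1 by simp
  have "sum d Q = d w + sum d (Q - {w})"
    using assms by (simp add: sum.remove finite_subset)
  also have "sum d (Q - {w}) = 0"
    by (rule sum.neutral) (use o assms in auto)
  finally have sQ: "sum d Q = 0" using dw by simp
  have "d u + sum d Q = 0" using h assms uw by force
  then have "d u = 0" using sQ by simp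
  then show ?thesis using o dw by auto
qed

definition Kc :: "('a \<Rightarrow> 'a \<Rightarrow> bool) \<Rightarrow> 'a \<Rightarrow> 'a \<Rightarrow> int" where
  "Kc C i j = (if i = j then 2 else if C i j then 1 else 0)"

definition gG :: "'a set \<Rightarrow> ('a \<Rightarrow> 'a \<Rightarrow> bool) \<Rightarrow> ('a \<Rightarrow> int) \<Rightarrow> 'a \<Rightarrow> int" where
  "gG V C d m = (\<Sum>j\<in>V. Kc C m j * d j)"

definition dynR :: "'a set \<Rightarrow> ('a \<Rightarrow> 'a \<Rightarrow> bool) \<Rightarrow> 'a \<Rightarrow> bool" where
  "dynR V C t \<longleftrightarrow> t \<in> V \<and> (\<exists>d. (\<forall>x. x \<notin> V \<longrightarrow> d x = 0) \<and> (\<exists>x\<in>V. d x \<noteq> 0) \<and>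
      0 \<le> gG V C d t \<and> gG V C d t \<le> 2 \<and> (\<forall>j\<in>V. j \<noteq> t \<longrightarrow> gG V C d j = 0))"

definition compR :: "('a \<Rightarrow> 'a \<Rightarrow> bool) \<Rightarrow> 'a \<Rightarrow> 'a \<Rightarrow> bool" where
  "compR r x y \<longleftrightarrow> r\<^sup>*\<^sup>* x y \<or> r\<^sup>*\<^sup>* y x"

definition orient :: "('a \<Rightarrow> 'a \<Rightarrow> bool) \<Rightarrow> ('a \<Rightarrow> 'a \<Rightarrow> bool) \<Rightarrow> bool" where
  "orient E r \<longleftrightarrow> (\<forall>x y. E x y \<longleftrightarrow> r x y \<or> r y x) \<and> (\<forall>x y. r\<^sup>*\<^sup>* x y \<longrightarrow> r\<^sup>*\<^sup>* y x \<longrightarrow> x = y)"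

definition graphV :: "'a set \<Rightarrow> ('a \<Rightarrow> 'a \<Rightarrow> bool) \<Rightarrow> bool" where
  "graphV V E \<longleftrightarrow> (\<forall>x y. E x y \<longrightarrow> x \<in> V \<and> y \<in> V \<and> x \<noteq> y)"

definition acyc :: "'a set \<Rightarrow> ('a \<Rightarrow> 'a \<Rightarrow> bool) \<Rightarrow> bool" where
  "acyc V E \<longleftrightarrow> \<not> (\<exists>cs. length cs \<ge> 3 \<and> distinct cs \<and> set cs \<subseteq> V \<and>
            (\<forall>i. Suc i < length cs \<longrightarrow> E (cs ! i) (cs ! Suc i)) \<and> E (last cs) (hd cs))"

lemma two_nbrs:
  assumes "finite V" "card {s\<in>V. E t s} \<le> 1" "a \<in> V" "b \<in> V" "E t a" "E t b" "a \<noteq> b"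
  shows False
proof -
  have "{a, b} \<subseteq> {s\<in>V. E t s}" using assms by auto
  then have "card {a,b} \<le> card {s\<in>V. E t s}" using assms(1) by (intro card_mono) auto
  then show False using assms by simp
qed

lemma gG_neg: "gG V C (\<lambda>k. - d k) m = - gG V C d m"
  unfolding gG_def by (simp add: sum_negf)

lemma dyn_close:
  assumes "t \<in> V" "\<forall>x. x \<notin> V \<longrightarrow> d x = 0" "0 \<le> gG V C d t" "gG V C d t \<le> 2"
    "\<forall>j\<in>V. j \<noteq> t \<longrightarrow> gG V C d j = 0" "\<forall>x. x \<notin> V \<longrightarrow> d' x = 0" "\<exists>x\<in>V. d' x \<noteq> 0"
    "(\<forall>j\<in>V. gG V C2 d' j = gG V C d j) \<or> (\<forall>j\<in>V. gG V C2 d' j = - gG V C d j)"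
  shows "dynR V C2 t"
  using assms(8)
proof
  assume h: "\<forall>j\<in>V. gG V C2 d' j = gG V C d j"
  show ?thesis unfolding dynR_def
    by (intro conjI exI[of _ d']) (use assms h in auto)
next
  assume h: "\<forall>j\<in>V. gG V C2 d' j = - gG V C d j"
  show ?thesis unfolding dynR_def
    by (intro conjI exI[of _ "\<lambda>k. - d' k"]) (use assms h in \<open>auto simp: gG_neg\<close>)
qed

lemma flip:
  assumes fin: "finite V" and gV: "graphV V E" and ac: "acyc V E" and ori: "orient E r"
    and ruw: "r u w" and trm: "card {s\<in>V. E t s} \<le> 1" and dy: "dynR V (compR r) t"
  defines "r2 \<equiv> \<lambda>x y. (r x y \<and> \<not> (x = u \<and> y = w)) \<or> (x = w \<and> y = u)"
  shows "orient E r2 \<and> dynR V (compR r2) t"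
proof -
  have Esym: "\<And>x y. E x y \<Longrightarrow> E y x" using ori unfolding orient_def by blast
  have rE: "\<And>x y. r x y \<Longrightarrow> E x y" using ori unfolding orient_def by blast
  have antis: "\<And>x y. r\<^sup>*\<^sup>* x y \<Longrightarrow> r\<^sup>*\<^sup>* y x \<Longrightarrow> x = y" using ori unfolding orient_def by blast
  have EV: "\<And>x y. E x y \<Longrightarrow> x \<in> V \<and> y \<in> V \<and> x \<noteq> y" using gV unfolding graphV_def by blast
  have Euw: "E u w" using rE ruw .
  have uV: "u \<in> V" and wV: "w \<in> V" and uw: "u \<noteq> w" using EV[OF Euw] by auto
  have nwu: "\<not> r w u" using antis[of u w] ruw uw by blast
  define Ee where "Ee = (\<lambda>x y. E x y \<and> \<not> (x = u \<and> y = w) \<and> \<not> (x = w \<and> y = u))"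
  define W where "W = {x. Ee\<^sup>*\<^sup>* w x}"
  define U where "U = V - W"
  have wW: "w \<in> W" unfolding W_def by simp
  have WV: "W \<subseteq> V"
  proof
    fix x assume "x \<in> W"
    then have "Ee\<^sup>*\<^sup>* w x" unfolding W_def by simp
    then show "x \<in> V" by (induction rule: rtranclp_induct) (use wV EV Ee_def in auto)
  qed
  have uW: "u \<notin> W"
  proof
    assume "u \<in> W"
    then have "Ee\<^sup>*\<^sup>* w u" unfolding W_def by simp
    then obtain xs where "rtrancl_path Ee w xs u" by (auto simp: rtranclp_eq_rtrancl_path)
    then obtain ys where p: "rtrancl_path Ee w ys u" and dis: "distinct (w # ys)"
      by (rule rtrancl_path_distinct)
    note pp = path_props[OF p]
    have ysV: "set ys \<subseteq> V" using path_set[OF p, of V] EV Ee_def by blast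
    have yne: "ys \<noteq> []" using pp uw by auto
    have "length ys \<ge> 2"
    proof (rule ccontr)
      assume "\<not> length ys \<ge> 2"
      then obtain z where "ys = [z]" using yne by (cases ys) (auto simp: Suc_le_eq)
      then have "z = u" and "Ee w z" using pp by auto
      then show False unfolding Ee_def by simp
    qed
    then have "length (w # ys) \<ge> 3" by simp
    moreover have "set (w # ys) \<subseteq> V" using ysV wV by simp
    moreover have "\<forall>i. Suc i < length (w#ys) \<longrightarrow> E ((w#ys) ! i) ((w#ys) ! Suc i)"
      using pp unfolding Ee_def by blast
    moreover have "E (last (w#ys)) (hd (w#ys))" using pp yne Euw by simp
    ultimately show False using ac dis unfolding acyc_def by blast
  qed
  have crossE: "\<And>x y. E x y \<Longrightarrow> x \<in> W \<Longrightarrow> y \<notin> W \<Longrightarrow> x = w \<and> y = u"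
  proof -
    fix x y assume a: "E x y" "x \<in> W" "y \<notin> W"
    show "x = w \<and> y = u"
    proof (rule ccontr)
      assume "\<not> (x = w \<and> y = u)"
      moreover have "x \<noteq> u" using a uW by auto
      ultimately have "Ee x y" using a unfolding Ee_def by auto
      then have "Ee\<^sup>*\<^sup>* w y" using a(2) unfolding W_def by (simp add: rtranclp.rtrancl_into_rtrancl)
      then show False using a(3) unfolding W_def by simp
    qed
  qed
  have clW: "\<forall>x y. r x y \<longrightarrow> x \<in> W \<longrightarrow> y \<in> W"
    using crossE rE nwu by blast
  have inW: "\<forall>x y. r x y \<longrightarrow> x \<notin> W \<longrightarrow> y \<in> W \<longrightarrow> x = u \<and> y = w"
    using crossE rE Esym by blast
  have clU2: "\<forall>x y. r2 x y \<longrightarrow> x \<in> -W \<longrightarrow> y \<in> -W"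
    using inW wW unfolding r2_def by auto
  have inU2: "\<forall>x y. r2 x y \<longrightarrow> x \<notin> -W \<longrightarrow> y \<in> -W \<longrightarrow> x = w \<and> y = u"
    using clW unfolding r2_def by auto
  have sU: "\<And>a b. a \<notin> W \<Longrightarrow> b \<notin> W \<Longrightarrow> r\<^sup>*\<^sup>* a b \<longleftrightarrow> r2\<^sup>*\<^sup>* a b"
  proof
    fix a b assume ab: "a \<notin> W" "b \<notin> W"
    {
      assume "r\<^sup>*\<^sup>* a b"
      then have "(\<lambda>x y. r x y \<and> x \<notin> W \<and> y \<notin> W)\<^sup>*\<^sup>* a b" using closed_restr2[OF clW] ab by blast
      then show "r2\<^sup>*\<^sup>* a b"
        by (rule mono_rtranclp[rule_format, rotated]) (use wW in \<open>auto simp: r2_def\<close>)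
    }
    {
      assume "r2\<^sup>*\<^sup>* a b"
      then have "(\<lambda>x y. r2 x y \<and> x \<in> -W \<and> y \<in> -W)\<^sup>*\<^sup>* a b" using closed_restr[OF clU2] ab by blast
      then show "r\<^sup>*\<^sup>* a b"
        by (rule mono_rtranclp[rule_format, rotated]) (use wW in \<open>auto simp: r2_def\<close>)
    }
  qed
  have sW: "\<And>a b. a \<in> W \<Longrightarrow> b \<in> W \<Longrightarrow> r\<^sup>*\<^sup>* a b \<longleftrightarrow> r2\<^sup>*\<^sup>* a b"
  proof
    fix a b assume ab: "a \<in> W" "b \<in> W"
    {
      assume "r\<^sup>*\<^sup>* a b"
      then have "(\<lambda>x y. r x y \<and> x \<in> W \<and> y \<in> W)\<^sup>*\<^sup>* a b" using closed_restr[OF clW] ab by blast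
      then show "r2\<^sup>*\<^sup>* a b"
        by (rule mono_rtranclp[rule_format, rotated]) (use uW in \<open>auto simp: r2_def\<close>)
    }
    {
      assume "r2\<^sup>*\<^sup>* a b"
      then have "(\<lambda>x y. r2 x y \<and> x \<notin> -W \<and> y \<notin> -W)\<^sup>*\<^sup>* a b" using closed_restr2[OF clU2] ab by blast
      then show "r\<^sup>*\<^sup>* a b"
        by (rule mono_rtranclp[rule_format, rotated]) (use uW in \<open>auto simp: r2_def\<close>)
    }
  qed
  have cr1: "\<And>a b. a \<notin> W \<Longrightarrow> b \<in> W \<Longrightarrow> r\<^sup>*\<^sup>* a b \<longleftrightarrow> r\<^sup>*\<^sup>* a u \<and> r\<^sup>*\<^sup>* w b"
  proof
    fix a b assume ab: "a \<notin> W" "b \<in> W"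
    show "r\<^sup>*\<^sup>* a b \<Longrightarrow> r\<^sup>*\<^sup>* a u \<and> r\<^sup>*\<^sup>* w b" using cross_rt[OF inW] ab by blast
    show "r\<^sup>*\<^sup>* a u \<and> r\<^sup>*\<^sup>* w b \<Longrightarrow> r\<^sup>*\<^sup>* a b" using ruw
      by (meson rtranclp.rtrancl_into_rtrancl rtranclp_trans)
  qed
  have cr2: "\<And>a b. a \<in> W \<Longrightarrow> b \<notin> W \<Longrightarrow> \<not> r\<^sup>*\<^sup>* a b"
    using closed_rt[OF clW] by blast
  have cr3: "\<And>a b. a \<notin> W \<Longrightarrow> b \<in> W \<Longrightarrow> \<not> r2\<^sup>*\<^sup>* a b"
    using closed_rt[OF clU2] by blast
  have cr4: "\<And>a b. a \<in> W \<Longrightarrow> b \<notin> W \<Longrightarrow> r2\<^sup>*\<^sup>* a b \<longleftrightarrow> r2\<^sup>*\<^sup>* a w \<and> r2\<^sup>*\<^sup>* u b"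
  proof
    fix a b assume ab: "a \<in> W" "b \<notin> W"
    show "r2\<^sup>*\<^sup>* a b \<Longrightarrow> r2\<^sup>*\<^sup>* a w \<and> r2\<^sup>*\<^sup>* u b" using cross_rt[OF inU2] ab by blast
    have "r2 w u" unfolding r2_def by simp
    then show "r2\<^sup>*\<^sup>* a w \<and> r2\<^sup>*\<^sup>* u b \<Longrightarrow> r2\<^sup>*\<^sup>* a b"
      by (meson rtranclp.rtrancl_into_rtrancl rtranclp_trans)
  qed
  have ori2: "orient E r2"
    unfolding orient_def
  proof (intro conjI allI impI)
    fix x y
    show "E x y \<longleftrightarrow> r2 x y \<or> r2 y x"
      using ori Euw Esym unfolding orient_def r2_def by blast
  next
    fix x y assume h: "r2\<^sup>*\<^sup>* x y" "r2\<^sup>*\<^sup>* y x"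
    show "x = y"
    proof (cases "x \<in> W")
      case True
      show ?thesis
      proof (cases "y \<in> W")
        case True
        then show ?thesis using \<open>x \<in> W\<close> h sW antis by blast
      next
        case False
        then show ?thesis using \<open>x \<in> W\<close> h cr3 by blast
      qed
    next
      case False
      show ?thesis
      proof (cases "y \<in> W")
        case True
        then show ?thesis using \<open>x \<notin> W\<close> h cr3 by blast
      next
        case False
        then show ?thesis using \<open>x \<notin> W\<close> h sU antis by blast
      qed
    qed
  qed
  define P where "P = {a\<in>U. r\<^sup>*\<^sup>* a u}"
  define P' where "P' = {a\<in>U. r\<^sup>*\<^sup>* u a}"
  define Q where "Q = {b\<in>W. r\<^sup>*\<^sup>* w b}"
  define Q' where "Q' = {b\<in>W. r\<^sup>*\<^sup>* b w}"
  define K where "K = Kc (compR r)"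
  define K2 where "K2 = Kc (compR r2)"
  have UW1: "U \<inter> W = {}" and UW2: "V = U \<union> W" using WV unfolding U_def by auto
  have WU1: "W \<inter> U = {}" and WU2: "V = W \<union> U" using UW1 UW2 by auto
  have uU: "u \<in> U" using uV uW unfolding U_def by simp
  have PU: "P \<subseteq> U" and P'U: "P' \<subseteq> U" and QW: "Q \<subseteq> W" and Q'W: "Q' \<subseteq> W"
    unfolding P_def P'_def Q_def Q'_def by auto
  have uP: "u \<in> P" and uP': "u \<in> P'" and wQ: "w \<in> Q" and wQ': "w \<in> Q'"
    unfolding P_def P'_def Q_def Q'_def using uU wW by auto
  have sameU: "\<forall>i\<in>U. \<forall>j\<in>U. K2 i j = K i j"
    unfolding K_def K2_def Kc_def compR_def U_def using sU by auto
  have sameW: "\<forall>i\<in>W. \<forall>j\<in>W. K2 i j = K i j"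
    unfolding K_def K2_def Kc_def compR_def using sW by auto
  have cross: "\<forall>a\<in>U. \<forall>b\<in>W. K a b = (if a \<in> P \<and> b \<in> Q then 1 else 0)
                 \<and> K b a = (if a \<in> P \<and> b \<in> Q then 1 else 0)
                 \<and> K2 a b = (if a \<in> P' \<and> b \<in> Q' then 1 else 0)
                 \<and> K2 b a = (if a \<in> P' \<and> b \<in> Q' then 1 else 0)"
  proof (intro ballI)
    fix a b assume a: "a \<in> U" and b: "b \<in> W"
    have aW: "a \<notin> W" using a unfolding U_def by simp
    have ab: "a \<noteq> b" using aW b by auto
    have c1: "compR r a b \<longleftrightarrow> a \<in> P \<and> b \<in> Q"
      unfolding compR_def P_def Q_def using cr1[OF aW b] cr2[OF b aW] a b by auto
    have c2: "compR r2 a b \<longleftrightarrow> a \<in> P' \<and> b \<in> Q'"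
      unfolding compR_def P'_def Q'_def using cr3[OF aW b] cr4[OF b aW] sW[OF b wW] sU[OF uW aW] a b by auto
    show "K a b = (if a \<in> P \<and> b \<in> Q then 1 else 0)
                 \<and> K b a = (if a \<in> P \<and> b \<in> Q then 1 else 0)
                 \<and> K2 a b = (if a \<in> P' \<and> b \<in> Q' then 1 else 0)
                 \<and> K2 b a = (if a \<in> P' \<and> b \<in> Q' then 1 else 0)"
      unfolding K_def K2_def Kc_def using c1 c2 ab by (auto simp: compR_def)
  qed
  have cross': "\<forall>a\<in>W. \<forall>b\<in>U. K a b = (if a \<in> Q \<and> b \<in> P then 1 else 0)
                 \<and> K b a = (if a \<in> Q \<and> b \<in> P then 1 else 0)
                 \<and> K2 a b = (if a \<in> Q' \<and> b \<in> P' then 1 else 0)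
                 \<and> K2 b a = (if a \<in> Q' \<and> b \<in> P' then 1 else 0)"
    using cross by auto
  have ku: "\<forall>a\<in>U. K a u = (if a \<in> P then 1 else 0) + (if a \<in> P' then 1 else 0)
                 \<and> K u a = (if a \<in> P then 1 else 0) + (if a \<in> P' then 1 else 0)"
  proof
    fix a assume a: "a \<in> U"
    show "K a u = (if a \<in> P then 1 else 0) + (if a \<in> P' then 1 else 0)
                 \<and> K u a = (if a \<in> P then 1 else 0) + (if a \<in> P' then 1 else 0)"
    proof (cases "a = u")
      case True then show ?thesis using uP uP' unfolding K_def Kc_def by simp
    next
      case False
      then have "\<not> (r\<^sup>*\<^sup>* a u \<and> r\<^sup>*\<^sup>* u a)" using antis by blast
      then show ?thesis using False a unfolding K_def Kc_def compR_def P_def P'_def by auto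
    qed
  qed
  have kw: "\<forall>b\<in>W. K w b = (if b \<in> Q then 1 else 0) + (if b \<in> Q' then 1 else 0)
                 \<and> K b w = (if b \<in> Q then 1 else 0) + (if b \<in> Q' then 1 else 0)"
  proof
    fix a assume a: "a \<in> W"
    show "K w a = (if a \<in> Q then 1 else 0) + (if a \<in> Q' then 1 else 0)
                 \<and> K a w = (if a \<in> Q then 1 else 0) + (if a \<in> Q' then 1 else 0)"
    proof (cases "a = w")
      case True then show ?thesis using wQ wQ' unfolding K_def Kc_def by simp
    next
      case False
      then have "\<not> (r\<^sup>*\<^sup>* a w \<and> r\<^sup>*\<^sup>* w a)" using antis by blast
      then show ?thesis using False a unfolding K_def Kc_def compR_def Q_def Q'_def by auto
    qed
  qed
  have kw': "\<forall>b\<in>W. K b w = (if b \<in> Q then 1 else 0) + (if b \<in> Q' then 1 else 0)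
                 \<and> K w b = (if b \<in> Q then 1 else 0) + (if b \<in> Q' then 1 else 0)" using kw by blast
  have ku': "\<forall>a\<in>U. K u a = (if a \<in> P then 1 else 0) + (if a \<in> P' then 1 else 0)
                 \<and> K a u = (if a \<in> P then 1 else 0) + (if a \<in> P' then 1 else 0)" using ku by blast
  have Kuu: "K u u = 2" and Kww: "K w w = 2" unfolding K_def Kc_def by simp_all
  have finW: "finite W" and finU: "finite U" using fin WV unfolding U_def by (auto intro: finite_subset)
  have UV: "U \<subseteq> V" unfolding U_def by auto
  have wU: "w \<notin> U" using wW unfolding U_def by simp
  from dy obtain d where tV: "t \<in> V" and dsup: "\<forall>x. x \<notin> V \<longrightarrow> d x = 0" and dnz: "\<exists>x\<in>V. d x \<noteq> 0"
    and g1: "0 \<le> gG V (compR r) d t" and g2: "gG V (compR r) d t \<le> 2"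
    and g0: "\<forall>j\<in>V. j \<noteq> t \<longrightarrow> gG V (compR r) d j = 0"
    unfolding dynR_def by blast
  define g where "g = (\<lambda>j. \<Sum>k\<in>V. K j k * d k)"
  have gg: "\<And>j. gG V (compR r) d j = g j" unfolding g_def gG_def K_def by simp
  have gg2: "\<And>j d'. gG V (compR r2) d' j = (\<Sum>k\<in>V. K2 j k * d' k)" unfolding gG_def K2_def by simp
  have gz: "\<And>j. j \<in> V \<Longrightarrow> j \<noteq> t \<Longrightarrow> g j = 0" using g0 gg by simp
  have dyn2: "dynR V (compR r2) t"
  proof (cases "t = u")
    case True
    have Pu: "P = {u}"
    proof (rule ccontr)
      assume "P \<noteq> {u}"
      then obtain a where a: "a \<in> P" "a \<noteq> u" using uP by blast
      then have "r\<^sup>*\<^sup>* a u" unfolding P_def by simp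
      then obtain y where "r y u" using a(2) by (cases rule: rtranclp.cases) auto
      then have "E u y" "y \<noteq> w" "y \<in> V" using rE Esym nwu EV by blast+
      then show False using two_nbrs[where E=E and t=t and a=w and b=y, OF fin trm] True Euw wV by blast
    qed
    have P'u: "P' = {u}"
    proof (rule ccontr)
      assume "P' \<noteq> {u}"
      then obtain a where a: "a \<in> P'" "a \<noteq> u" "a \<notin> W" using uP' unfolding P'_def U_def by blast
      then have "r\<^sup>*\<^sup>* u a" unfolding P'_def by simp
      then obtain y where y: "r u y" "r\<^sup>*\<^sup>* y a" using a(2) by (cases rule: converse_rtranclpE) auto
      have "y \<noteq> w" using closed_rt[OF clW y(2)] a(3) wW by blast
      then have "E u y" "y \<noteq> w" "y \<in> V" using rE y(1) EV by blast+
      then show False using two_nbrs[where E=E and t=t and a=w and b=y, OF fin trm] True Euw wV by blast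
    qed
    define d' where "d' = (\<lambda>k. d k + (if k = w then sum d P else 0) + (if k = u then - (\<Sum>k\<in>U. K u k * d k) else 0))"
    note A = alg[OF fin WU1 WU2 wW uU QW Q'W PU P'U wQ wQ' uP uP' sameW sameU cross' kw' ku', where d = d]
    have A1: "\<forall>j\<in>W. (\<Sum>k\<in>V. K2 j k * d' k) = g j" using A(1) unfolding d'_def g_def by simp
    have A2: "\<forall>j\<in>U. (\<Sum>k\<in>V. K2 j k * d' k) = g j - (if j \<in> P then g u else 0) + (if j \<in> P' then g w - g u else 0)"
      using A(2) unfolding d'_def g_def by simp
    have nz: "\<exists>x\<in>V. d' x \<noteq> 0"
    proof (rule ccontr)
      assume "\<not> (\<exists>x\<in>V. d' x \<noteq> 0)"
      then have "\<forall>k\<in>V. d k + (if k = w then sum d P else 0) + (if k = u then - (\<Sum>k\<in>U. K u k * d k) else 0) = 0"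
        unfolding d'_def by simp
      then have "\<forall>k\<in>V. d k = 0"
        using alg_nz[where K=K, OF finU uU wU Kuu uP PU wV UV] by blast
      then show False using dnz by blast
    qed
    have sup: "\<forall>x. x \<notin> V \<longrightarrow> d' x = 0" using dsup uV wV unfolding d'_def by auto
    have "\<forall>j\<in>V. gG V (compR r2) d' j = - gG V (compR r) d j"
    proof
      fix j assume j: "j \<in> V"
      have gw0: "g w = 0" using gz wV uw True by simp
      show "gG V (compR r2) d' j = - gG V (compR r) d j"
      proof (cases "j \<in> W")
        case True
        then show ?thesis using A1 gg gg2 gz j wW \<open>t = u\<close> uW by (metis add.inverse_neutral)
      next
        case False
        then have jU: "j \<in> U" using j unfolding U_def by simp
        show ?thesis using A2 jU gg gg2 gz[OF j] Pu P'u gw0 \<open>t = u\<close> by auto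
      qed
    qed
    then show ?thesis using dyn_close[OF tV dsup g1 g2 g0 sup nz] by blast
  next
    case tu: False
    show ?thesis
    proof (cases "t = w")
      case True
      have Qw: "Q = {w}"
      proof (rule ccontr)
        assume "Q \<noteq> {w}"
        then obtain a where a: "a \<in> Q" "a \<noteq> w" using wQ by blast
        then have "r\<^sup>*\<^sup>* w a" unfolding Q_def by simp
        then obtain y where "r w y" using a(2) by (cases rule: converse_rtranclpE) auto
        then have "E w y" "y \<noteq> u" "y \<in> V" using rE nwu EV by blast+
        then show False using two_nbrs[where E=E and t=t and a=u and b=y, OF fin trm] True Euw Esym uV by blast
      qed
      have Q'w: "Q' = {w}"
      proof (rule ccontr)
        assume "Q' \<noteq> {w}"
        then obtain a where a: "a \<in> Q'" "a \<noteq> w" "a \<in> W" using wQ' unfolding Q'_def by blast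
        then have "r\<^sup>*\<^sup>* a w" unfolding Q'_def by simp
        then obtain y where y: "r\<^sup>*\<^sup>* a y" "r y w" using a(2) by (cases rule: rtranclp.cases) auto
        have "y \<noteq> u" using closed_rt[OF clW y(1) a(3)] uW by blast
        then have "E w y" "y \<noteq> u" "y \<in> V" using rE Esym y(2) EV by blast+
        then show False using two_nbrs[where E=E and t=t and a=u and b=y, OF fin trm] True Euw Esym uV by blast
      qed
      define d' where "d' = (\<lambda>k. d k + (if k = u then sum d Q else 0) + (if k = w then - (\<Sum>k\<in>W. K w k * d k) else 0))"
      note A = alg[OF fin UW1 UW2 uU wW PU P'U QW Q'W uP uP' wQ wQ' sameU sameW cross ku kw, where d = d]
      have A1: "\<forall>j\<in>U. (\<Sum>k\<in>V. K2 j k * d' k) = g j" using A(1) unfolding d'_def g_def by simp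
      have A2: "\<forall>j\<in>W. (\<Sum>k\<in>V. K2 j k * d' k) = g j - (if j \<in> Q then g w else 0) + (if j \<in> Q' then g u - g w else 0)"
        using A(2) unfolding d'_def g_def by simp
      have nz: "\<exists>x\<in>V. d' x \<noteq> 0"
      proof (rule ccontr)
        assume "\<not> (\<exists>x\<in>V. d' x \<noteq> 0)"
        then have "\<forall>k\<in>V. d k + (if k = u then sum d Q else 0) + (if k = w then - (\<Sum>k\<in>W. K w k * d k) else 0) = 0"
          unfolding d'_def by simp
        then have "\<forall>k\<in>V. d k = 0"
          using alg_nz[where K=K, OF finW wW uW Kww wQ QW uV WV] by blast
        then show False using dnz by blast
      qed
      have sup: "\<forall>x. x \<notin> V \<longrightarrow> d' x = 0" using dsup uV wV unfolding d'_def by auto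
      have "\<forall>j\<in>V. gG V (compR r2) d' j = - gG V (compR r) d j"
      proof
        fix j assume j: "j \<in> V"
        have gu0: "g u = 0" using gz uV uw True by simp
        show "gG V (compR r2) d' j = - gG V (compR r) d j"
        proof (cases "j \<in> W")
          case False
          then have jU: "j \<in> U" using j unfolding U_def by simp
          then show ?thesis using A1 gg gg2 gz j wU \<open>t = w\<close> by (metis add.inverse_neutral)
        next
          case jW: True
          show ?thesis using A2 jW gg gg2 gz[OF j] Qw Q'w gu0 \<open>t = w\<close> by auto
        qed
      qed
      then show ?thesis using dyn_close[OF tV dsup g1 g2 g0 sup nz] by blast
    next
      case tw: False
      define d' where "d' = (\<lambda>k. d k + (if k = u then sum d Q else 0) + (if k = w then - (\<Sum>k\<in>W. K w k * d k) else 0))"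
      note A = alg[OF fin UW1 UW2 uU wW PU P'U QW Q'W uP uP' wQ wQ' sameU sameW cross ku kw, where d = d]
      have A1: "\<forall>j\<in>U. (\<Sum>k\<in>V. K2 j k * d' k) = g j" using A(1) unfolding d'_def g_def by simp
      have A2: "\<forall>j\<in>W. (\<Sum>k\<in>V. K2 j k * d' k) = g j - (if j \<in> Q then g w else 0) + (if j \<in> Q' then g u - g w else 0)"
        using A(2) unfolding d'_def g_def by simp
      have nz: "\<exists>x\<in>V. d' x \<noteq> 0"
      proof (rule ccontr)
        assume "\<not> (\<exists>x\<in>V. d' x \<noteq> 0)"
        then have "\<forall>k\<in>V. d k + (if k = u then sum d Q else 0) + (if k = w then - (\<Sum>k\<in>W. K w k * d k) else 0) = 0"
          unfolding d'_def by simp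
        then have "\<forall>k\<in>V. d k = 0"
          using alg_nz[where K=K, OF finW wW uW Kww wQ QW uV WV] by blast
        then show False using dnz by blast
      qed
      have sup: "\<forall>x. x \<notin> V \<longrightarrow> d' x = 0" using dsup uV wV unfolding d'_def by auto
      have gu0: "g u = 0" and gw0: "g w = 0" using gz uV wV tu tw by auto
      have "\<forall>j\<in>V. gG V (compR r2) d' j = gG V (compR r) d j"
      proof
        fix j assume j: "j \<in> V"
        show "gG V (compR r2) d' j = gG V (compR r) d j"
        proof (cases "j \<in> W")
          case False
          then have jU: "j \<in> U" using j unfolding U_def by simp
          then show ?thesis using A1 gg gg2 by simp
        next
          case jW: True
          show ?thesis using A2 jW gg gg2 gu0 gw0 by simp
        qed
      qed
      then show ?thesis using dyn_close[OF tV dsup g1 g2 g0 sup nz] by blast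
    qed
  qed
  then show ?thesis using ori2 by simp
qed



lemma main_ind:
  assumes fin: "finite V" and gV: "graphV V E" and ac: "acyc V E"
    and trm: "card {s\<in>V. E t s} \<le> 1" and ori1: "orient E r1"
  shows "orient E r \<Longrightarrow> dynR V (compR r) t \<Longrightarrow> dynR V (compR r1) t"
proof (induction "card {(x,y). r x y \<and> \<not> r1 x y}" arbitrary: r rule: less_induct)
  case less
  have ori: "orient E r" and dy: "dynR V (compR r) t" using less.prems by auto
  have EV: "\<And>x y. E x y \<Longrightarrow> x \<in> V \<and> y \<in> V \<and> x \<noteq> y" using gV unfolding graphV_def by blast
  have fs: "finite {(x,y). r x y \<and> \<not> r1 x y}"
  proof (rule finite_subset)
    show "{(x,y). r x y \<and> \<not> r1 x y} \<subseteq> V \<times> V" using ori EV unfolding orient_def by blast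
    show "finite (V \<times> V)" using fin by simp
  qed
  show ?case
  proof (cases "\<exists>x y. r x y \<and> \<not> r1 x y")
    case False
    have "r = r1"
    proof (intro ext iffI)
      fix x y assume "r x y" then show "r1 x y" using False by blast
    next
      fix x y assume h: "r1 x y"
      then have "E x y" using ori1 unfolding orient_def by blast
      then have "r x y \<or> r y x" using ori unfolding orient_def by blast
      moreover have "\<not> r y x"
      proof
        assume "r y x"
        then have "r1 y x" using False by blast
        then have "x = y" using h ori1 unfolding orient_def by blast
        then show False using EV \<open>E x y\<close> by blast
      qed
      ultimately show "r x y" by blast
    qed
    then show ?thesis using dy by simp
  next
    case True
    then obtain u w where ruw: "r u w" and n1: "\<not> r1 u w" by blast
    define r2 where "r2 = (\<lambda>x y. (r x y \<and> \<not> (x = u \<and> y = w)) \<or> (x = w \<and> y = u))"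
    have fl: "orient E r2 \<and> dynR V (compR r2) t"
      unfolding r2_def by (rule flip[OF fin gV ac ori ruw trm dy])
    have "E u w" using ori ruw unfolding orient_def by blast
    then have r1wu: "r1 w u" using ori1 n1 unfolding orient_def by blast
    have sub: "{(x,y). r2 x y \<and> \<not> r1 x y} \<subseteq> {(x,y). r x y \<and> \<not> r1 x y} - {(u,w)}"
      using r1wu unfolding r2_def by auto
    have "card {(x,y). r2 x y \<and> \<not> r1 x y} < card {(x,y). r x y \<and> \<not> r1 x y}"
    proof -
      have "{(x,y). r x y \<and> \<not> r1 x y} - {(u,w)} \<subset> {(x,y). r x y \<and> \<not> r1 x y}"
        using ruw n1 by auto
      then have "{(x,y). r2 x y \<and> \<not> r1 x y} \<subset> {(x,y). r x y \<and> \<not> r1 x y}" using sub by blast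
      then show ?thesis using fs by (rule psubset_card_mono[rotated])
    qed
    then show ?thesis using less.hyps fl by blast
  qed
qed

lemma le_rt:
  assumes fin: "finite V" and po: "poset_on V le"
  shows "x \<in> V \<Longrightarrow> y \<in> V \<Longrightarrow> le x y \<Longrightarrow> (covers V le)\<^sup>*\<^sup>* x y"
proof (induction "card {z\<in>V. le x z \<and> le z y}" arbitrary: x y rule: less_induct)
  case less
  have refl: "\<And>x. x \<in> V \<Longrightarrow> le x x" and anti: "\<And>x y. x \<in> V \<Longrightarrow> y \<in> V \<Longrightarrow> le x y \<Longrightarrow> le y x \<Longrightarrow> x = y"
    and trans: "\<And>x y z. x \<in> V \<Longrightarrow> y \<in> V \<Longrightarrow> z \<in> V \<Longrightarrow> le x y \<Longrightarrow> le y z \<Longrightarrow> le x z"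
    using po unfolding poset_on_def by blast+
  show ?case
  proof (cases "x = y")
    case True then show ?thesis by simp
  next
    case ne: False
    show ?thesis
    proof (cases "covers V le x y")
      case True then show ?thesis by simp
    next
      case False
      then obtain z where z: "z \<in> V" "le x z" "x \<noteq> z" "le z y" "z \<noteq> y"
        using less.prems ne unfolding covers_def less_in_def by blast
      have c1: "card {z'\<in>V. le x z' \<and> le z' z} < card {z\<in>V. le x z \<and> le z y}"
      proof (rule psubset_card_mono)
        show "finite {z\<in>V. le x z \<and> le z y}" using fin by simp
        have "{z'\<in>V. le x z' \<and> le z' z} \<subseteq> {z\<in>V. le x z \<and> le z y}"
          using trans z less.prems by blast
        moreover have "y \<in> {z\<in>V. le x z \<and> le z y}" using less.prems refl by blast
        moreover have "y \<notin> {z'\<in>V. le x z' \<and> le z' z}" using anti z less.prems by blast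
        ultimately show "{z'\<in>V. le x z' \<and> le z' z} \<subset> {z\<in>V. le x z \<and> le z y}" by blast
      qed
      have c2: "card {z'\<in>V. le z z' \<and> le z' y} < card {z\<in>V. le x z \<and> le z y}"
      proof (rule psubset_card_mono)
        show "finite {z\<in>V. le x z \<and> le z y}" using fin by simp
        have "{z'\<in>V. le z z' \<and> le z' y} \<subseteq> {z\<in>V. le x z \<and> le z y}"
          using trans z less.prems by blast
        moreover have "x \<in> {z\<in>V. le x z \<and> le z y}" using less.prems refl by blast
        moreover have "x \<notin> {z'\<in>V. le z z' \<and> le z' y}" using anti z less.prems by blast
        ultimately show "{z'\<in>V. le z z' \<and> le z' y} \<subset> {z\<in>V. le x z \<and> le z y}" by blast
      qed
      have "(covers V le)\<^sup>*\<^sup>* x z" using less.hyps[OF c1] less.prems z by blast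
      moreover have "(covers V le)\<^sup>*\<^sup>* z y" using less.hyps[OF c2] less.prems z by blast
      ultimately show ?thesis by (rule rtranclp_trans)
    qed
  qed
qed

lemma rt_le:
  assumes po: "poset_on V le"
  shows "(covers V le)\<^sup>*\<^sup>* x y \<Longrightarrow> x = y \<or> (x \<in> V \<and> y \<in> V \<and> le x y)"
proof (induction rule: rtranclp_induct)
  case base then show ?case by simp
next
  case (step y z)
  have c: "y \<in> V" "z \<in> V" "le y z" using step.hyps(2) unfolding covers_def less_in_def by auto
  have trans: "\<And>x y z. x \<in> V \<Longrightarrow> y \<in> V \<Longrightarrow> z \<in> V \<Longrightarrow> le x y \<Longrightarrow> le y z \<Longrightarrow> le x z"
    using po unfolding poset_on_def by blast
  show ?case using step.IH c trans by blast
qed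

lemma orient_covers:
  assumes po: "poset_on V le"
  shows "\<forall>x y. (covers V le)\<^sup>*\<^sup>* x y \<longrightarrow> (covers V le)\<^sup>*\<^sup>* y x \<longrightarrow> x = y"
proof (intro allI impI)
  fix x y assume "(covers V le)\<^sup>*\<^sup>* x y" "(covers V le)\<^sup>*\<^sup>* y x"
  then show "x = y" using rt_le[OF po] po unfolding poset_on_def by blast
qed

lemma comp_eq:
  assumes fin: "finite V" and po: "poset_on V le" and "j \<in> V" "m \<in> V"
  shows "comparable_in le j m \<longleftrightarrow> compR (covers V le) m j"
proof -
  have refl: "le j j" using po assms(3) unfolding poset_on_def by blast
  have a: "le j m \<Longrightarrow> (covers V le)\<^sup>*\<^sup>* j m" using le_rt[OF fin po] assms(3,4) by blast
  have b: "le m j \<Longrightarrow> (covers V le)\<^sup>*\<^sup>* m j" using le_rt[OF fin po] assms(3,4) by blast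
  have c: "(covers V le)\<^sup>*\<^sup>* j m \<Longrightarrow> le j m \<or> le m j" using rt_le[OF po, of j m] refl by auto
  have d: "(covers V le)\<^sup>*\<^sup>* m j \<Longrightarrow> le j m \<or> le m j" using rt_le[OF po, of m j] refl by auto
  show ?thesis unfolding comparable_in_def compR_def using a b c d by blast
qed

lemma dfS_gG:
  assumes fin: "finite V" and m: "m \<in> V" and c: "\<forall>j\<in>V. comparable_in le j m \<longleftrightarrow> C m j"
  shows "dfS V le x m = gG V C x m"
proof -
  have "gG V C x m = Kc C m m * x m + (\<Sum>j\<in>V-{m}. Kc C m j * x j)"
    unfolding gG_def using fin m by (simp add: sum.remove)
  also have "(\<Sum>j\<in>V-{m}. Kc C m j * x j) = (\<Sum>j\<in>V-{m}. if C m j then x j else 0)"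
    by (rule sum.cong) (auto simp: Kc_def)
  also have "\<dots> = sum x {j\<in>V-{m}. C m j}"
    using sum.inter_filter[of "V-{m}" x "C m"] fin by simp
  also have "{j\<in>V-{m}. C m j} = {j \<in> V. j \<noteq> m \<and> comparable_in le j m}"
    using c by auto
  finally show ?thesis unfolding dfS_def by (simp add: Kc_def)
qed

theorem lemma7:
  fixes V :: "'a set" and le le' :: "'a \<Rightarrow> 'a \<Rightarrow> bool" and t :: 'a
  assumes "finite V"
    and "poset_on V le"
    and "hasse_acyclic V le"
    and "terminal_point V le t"
    and "dynkin_point V le t"
    and "poset_on V le'"
    and "\<forall>x\<in>V. \<forall>y\<in>V. hasse_edge V le' x y \<longleftrightarrow> hasse_edge V le x y"
  shows "dynkin_point V le' t"
proof -
  note fin = assms(1) and po = assms(2) and po' = assms(6)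
  define E where "E = hasse_edge V le"
  have gV: "graphV V E" unfolding graphV_def E_def hasse_edge_def covers_def less_in_def by auto
  have ac: "acyc V E" using assms(3) unfolding acyc_def hasse_acyclic_def E_def by simp
  have trm: "card {s\<in>V. E t s} \<le> 1" and tV: "t \<in> V"
    using assms(4) unfolding terminal_point_def hasse_degree_def E_def by auto
  have ori0: "orient E (covers V le)"
    unfolding orient_def using orient_covers[OF po] unfolding E_def hasse_edge_def by blast
  have ori1: "orient E (covers V le')"
  proof -
    have "\<forall>x y. E x y \<longleftrightarrow> covers V le' x y \<or> covers V le' y x"
    proof (intro allI)
      fix x y
      show "E x y \<longleftrightarrow> covers V le' x y \<or> covers V le' y x"
      proof (cases "x \<in> V \<and> y \<in> V")
        case True
        then show ?thesis using assms(7) unfolding E_def hasse_edge_def by blast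
      next
        case False
        then show ?thesis unfolding E_def hasse_edge_def covers_def by blast
      qed
    qed
    then show ?thesis unfolding orient_def using orient_covers[OF po'] by blast
  qed
  have dy0: "dynR V (compR (covers V le)) t"
  proof -
    from assms(5) obtain d where d: "(\<forall>x. x \<notin> V \<longrightarrow> d x = 0)" "(\<exists>x\<in>V. d x \<noteq> 0)"
        "0 \<le> dfS V le d t" "dfS V le d t \<le> 2" "(\<forall>j\<in>V. j \<noteq> t \<longrightarrow> dfS V le d j = 0)"
      unfolding dynkin_point_def by blast
    have eq: "\<And>m. m \<in> V \<Longrightarrow> dfS V le d m = gG V (compR (covers V le)) d m"
      using dfS_gG[OF fin] comp_eq[OF fin po] by blast
    show ?thesis unfolding dynR_def using d eq tV by auto
  qed
  have dy1: "dynR V (compR (covers V le')) t"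
    using main_ind[OF fin gV ac trm ori1 ori0 dy0] .
  then obtain d where d: "(\<forall>x. x \<notin> V \<longrightarrow> d x = 0)" "(\<exists>x\<in>V. d x \<noteq> 0)"
        "0 \<le> gG V (compR (covers V le')) d t" "gG V (compR (covers V le')) d t \<le> 2"
        "(\<forall>j\<in>V. j \<noteq> t \<longrightarrow> gG V (compR (covers V le')) d j = 0)"
    unfolding dynR_def by blast
  have eq: "\<And>m. m \<in> V \<Longrightarrow> dfS V le' d m = gG V (compR (covers V le')) d m"
    using dfS_gG[OF fin] comp_eq[OF fin po'] by blast
  show ?thesis unfolding dynkin_point_def using d eq tV by auto
qed


end
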